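(* Every $\frac{\kappa+1}{\kappa}$-APLS for the maximum matching problem on graphs of odd-girth at least $2\kappa+1$ has proof size $\Omega(\log\kappa)$.
   Context: All graphs are finite, connected and undirected, $G=(V,E)$, $N(v)$ is the set of neighbors of $v$; each node distinguishes its incident edges by port numbers. An input assignment $\mathsf{I}:V\to\{0,1\}^*$ and an output assignment $\mathsf{O}:V\to\{0,1\}^*$ give each node a local input and a local output; an IO graph $\langle G,\mathsf I,\mathsf O\rangle$ is a configuration graph with $S(v)=\mathsf I(v)\cdot\mathsf O(v)$. Given a universe $\mathcal U$ of configuration graphs and disjoint families $\mathcal F_Y,\mathcal F_N\subseteq\mathcal U$, a gap proof labeling scheme (GPLS) consists of a prover which, given a configuration graph in $\mathcal F_Y$, assigns a label $L(v)\in\{0,1\}^*$ to every node, and a verifier which at each node $v$ receives only $\langle S(v),L(v),L^N(v)\rangle$, where $L^N(v)$ is the vector of labels of $v$'s neighbors (indexed by port), and outputs True or False; the verifier accepts if all nodes output True and rejects otherwise. The GPLS is correct if (i) for every configuration graph in $\mathcal F_Y$ the verifier accepts under the prover's labels, and (ii) for every configuration graph in $\mathcal F_N$ the verifier rejects under every label assignment. Its proof size is the maximum label length assigned by the prover over configuration graphs in $\mathcal F_Y$. For an optimization problem $\Psi=\langle\Pi,f\rangle$ ($\Pi$ a set of IO graphs = feasible solutions, $f$ integer objective, $OPT_\Psi(G,\mathsf I)$ the optimum over feasible $\mathsf O$) and $\alpha\ge1$, an $\alpha$-APLS is a GPLS over $\mathcal U=\{\langle G,\mathsf I,\mathsf O\rangle:\langle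 G,\mathsf I\rangle\text{ admits a feasible solution}\}$ with $\mathcal F_Y$ the IO graphs in $\Pi$ with $f=OPT_\Psi$, and $\mathcal F_N$ equal to $\mathcal U$ minus the IO graphs in $\Pi$ with $f\ge OPT_\Psi/\alpha$ (for a maximization problem). Restricting to a graph family means the universe contains only IO graphs whose underlying graph lies in the family. Maximum matching: the output encodes a set $M\subseteq E$ (each node knows which incident edge, if any, is in $M$); feasible iff $M$ is a matching; $f=|M|$ is maximized. The odd-girth of a graph is the length of its shortest odd cycle ($\infty$ if none). *)

theory Defs
  imports Complex_Main
begin

text \<open>A graph is given by a finite vertex set V of naturals and, for each node v,
  the list nb v of its neighbours in port order (port p of v leads to nb v ! p).\<close>

definition graph_edges :: "nat set \<Rightarrow> (nat \<Rightarrow> nat list) \<Rightarrow> nat set set" where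
  "graph_edges V nb = {{u, v} | u v. u \<in> V \<and> v \<in> set (nb u)}"

definition adj :: "(nat \<Rightarrow> nat list) \<Rightarrow> nat \<Rightarrow> nat \<Rightarrow> bool" where
  "adj nb u v \<longleftrightarrow> v \<in> set (nb u)"

definition port_graph :: "nat set \<Rightarrow> (nat \<Rightarrow> nat list) \<Rightarrow> bool" where
  "port_graph V nb \<longleftrightarrow>
     finite V \<and> V \<noteq> {} \<and>
     (\<forall>v\<in>V. distinct (nb v) \<and> set (nb v) \<subseteq> V \<and> v \<notin> set (nb v)) \<and>
     (\<forall>v\<in>V. \<forall>u\<in>set (nb v). v \<in> set (nb u)) \<and>
     (\<forall>u\<in>V. \<forall>v\<in>V. (u, v) \<in> {(x, y). x \<in> V \<and> adj nb x y}\<^sup>*)"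

definition is_cycle :: "nat set \<Rightarrow> (nat \<Rightarrow> nat list) \<Rightarrow> nat list \<Rightarrow> bool" where
  "is_cycle V nb cs \<longleftrightarrow>
     length cs \<ge> 3 \<and> distinct cs \<and> set cs \<subseteq> V \<and>
     (\<forall>i < length cs - 1. adj nb (cs ! i) (cs ! Suc i)) \<and>
     adj nb (last cs) (hd cs)"

text \<open>odd-girth \<ge> g: every odd cycle has length at least g (vacuous if there is none,
  matching odd-girth = \<infinity>).\<close>

definition odd_girth_at_least :: "nat set \<Rightarrow> (nat \<Rightarrow> nat list) \<Rightarrow> nat \<Rightarrow> bool" where
  "odd_girth_at_least V nb g \<longleftrightarrow>
     (\<forall>cs. is_cycle V nb cs \<and> odd (length cs) \<longrightarrow> length cs \<ge> g)"

definition is_matching :: "nat set \<Rightarrow> (nat \<Rightarrow> nat list) \<Rightarrow> nat set set \<Rightarrow> bool" where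
  "is_matching V nb M \<longleftrightarrow>
     M \<subseteq> graph_edges V nb \<and> (\<forall>e\<in>M. \<forall>e'\<in>M. e \<noteq> e' \<longrightarrow> e \<inter> e' = {})"

text \<open>Output of a node: None (unmatched) or Some p, the port of its incident matching edge.\<close>

definition encodes :: "nat set \<Rightarrow> (nat \<Rightarrow> nat list) \<Rightarrow> (nat \<Rightarrow> nat option) \<Rightarrow> nat set set \<Rightarrow> bool" where
  "encodes V nb out M \<longleftrightarrow>
     M \<subseteq> graph_edges V nb \<and>
     (\<forall>v\<in>V. case out v of
        None \<Rightarrow> (\<forall>e\<in>M. v \<notin> e)
      | Some p \<Rightarrow> p < length (nb v) \<and> {v, nb v ! p} \<in> M)"

definition feasible_matching :: "nat set \<Rightarrow> (nat \<Rightarrow> nat list) \<Rightarrow> (nat \<Rightarrow> nat option) \<Rightarrow> bool" where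
  "feasible_matching V nb out \<longleftrightarrow> (\<exists>M. encodes V nb out M \<and> is_matching V nb M)"

definition matching_value :: "nat set \<Rightarrow> (nat \<Rightarrow> nat list) \<Rightarrow> (nat \<Rightarrow> nat option) \<Rightarrow> nat" where
  "matching_value V nb out = card {{v, nb v ! p} | v p. v \<in> V \<and> out v = Some p}"

definition opt_matching :: "nat set \<Rightarrow> (nat \<Rightarrow> nat list) \<Rightarrow> nat" where
  "opt_matching V nb = Max {card M | M. is_matching V nb M}"

text \<open>Universe for parameter \<kappa>: IO graphs whose underlying graph has odd-girth \<ge> 2\<kappa>+1
  (every graph admits the empty matching, so no further restriction).\<close>

definition in_universe :: "nat \<Rightarrow> nat set \<Rightarrow> (nat \<Rightarrow> nat list) \<Rightarrow> bool" where
  "in_universe \<kappa> V nb \<longleftrightarrow> port_graph V nb \<and> odd_girth_at_least V nb (2 * \<kappa> + 1)"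

definition yes_instance :: "nat \<Rightarrow> nat set \<Rightarrow> (nat \<Rightarrow> nat list) \<Rightarrow> (nat \<Rightarrow> nat option) \<Rightarrow> bool" where
  "yes_instance \<kappa> V nb out \<longleftrightarrow>
     in_universe \<kappa> V nb \<and> feasible_matching V nb out \<and>
     matching_value V nb out = opt_matching V nb"

definition no_instance :: "nat \<Rightarrow> nat set \<Rightarrow> (nat \<Rightarrow> nat list) \<Rightarrow> (nat \<Rightarrow> nat option) \<Rightarrow> bool" where
  "no_instance \<kappa> V nb out \<longleftrightarrow>
     in_universe \<kappa> V nb \<and>
     \<not> (feasible_matching V nb out \<and>
        real (matching_value V nb out) \<ge> real (opt_matching V nb) / ((real \<kappa> + 1) / real \<kappa>))"

text \<open>The verifier at v sees only the state S(v) (here: its output), its own label and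
  the labels of its neighbours in port order.\<close>

definition verifier_accepts ::
  "(nat option \<Rightarrow> bool list \<Rightarrow> bool list list \<Rightarrow> bool) \<Rightarrow> nat set \<Rightarrow> (nat \<Rightarrow> nat list) \<Rightarrow>
   (nat \<Rightarrow> nat option) \<Rightarrow> (nat \<Rightarrow> bool list) \<Rightarrow> bool" where
  "verifier_accepts D V nb out L \<longleftrightarrow> (\<forall>v\<in>V. D (out v) (L v) (map L (nb v)))"

definition is_APLS ::
  "nat \<Rightarrow> (nat set \<Rightarrow> (nat \<Rightarrow> nat list) \<Rightarrow> (nat \<Rightarrow> nat option) \<Rightarrow> nat \<Rightarrow> bool list) \<Rightarrow>
   (nat option \<Rightarrow> bool list \<Rightarrow> bool list list \<Rightarrow> bool) \<Rightarrow> bool" where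
  "is_APLS \<kappa> P D \<longleftrightarrow>
     (\<forall>V nb out. yes_instance \<kappa> V nb out \<longrightarrow> verifier_accepts D V nb out (P V nb out)) \<and>
     (\<forall>V nb out. no_instance \<kappa> V nb out \<longrightarrow> (\<forall>L. \<not> verifier_accepts D V nb out L))"

end

theory Submission
  imports Defs
begin

definition pc :: "nat \<Rightarrow> nat \<Rightarrow> nat" where
  "pc N v = (if v = 0 then N - 1 else v - 1)"
definition sc :: "nat \<Rightarrow> nat \<Rightarrow> nat" where
  "sc N v = (if Suc v = N then 0 else Suc v)"
definition cnb :: "nat \<Rightarrow> nat \<Rightarrow> nat list" where
  "cnb N v = [pc N v, sc N v]"
definition oo :: "nat \<Rightarrow> nat option" where
  "oo v = (if v = 0 then None else if odd v then Some 1 else Some 0)"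

lemma adj_cnb: "adj (cnb N) x y \<longleftrightarrow> y = pc N x \<or> y = sc N x"
  by (auto simp: adj_def cnb_def)

lemma pc_sc: "v < N \<Longrightarrow> pc N (sc N v) = v" by (auto simp: pc_def sc_def)
lemma sc_pc: "v < N \<Longrightarrow> sc N (pc N v) = v" by (auto simp: pc_def sc_def)
lemma pc_lt: "v < N \<Longrightarrow> pc N v < N" by (auto simp: pc_def)
lemma sc_lt: "v < N \<Longrightarrow> sc N v < N" by (auto simp: sc_def)

lemma reach: "u < N \<Longrightarrow> (u, (u + k) mod N) \<in> {(x, y). x \<in> {0..<N} \<and> adj (cnb N) x y}\<^sup>*"
proof (induction k)
  case 0 then show ?case by simp
next
  case (Suc k)
  have "(u + k) mod N < N" using Suc by simp
  moreover have "sc N ((u + k) mod N) = (u + Suc k) mod N"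
    using Suc.prems by (auto simp: sc_def mod_Suc)
  ultimately show ?case using Suc
    by (metis (no_types, lifting) adj_cnb atLeastLessThan_iff case_prodI mem_Collect_eq rtrancl.rtrancl_into_rtrancl zero_le)
qed

lemma port_graph_cycle: "3 \<le> N \<Longrightarrow> port_graph {0..<N} (cnb N)"
  unfolding port_graph_def
proof (intro conjI ballI)
  assume N: "3 \<le> N"
  show "finite {0..<N}" by simp
  show "{0..<N} \<noteq> {}" using N by auto
  fix v assume v: "v \<in> {0..<N}"
  show "distinct (cnb N v)" using N v by (auto simp: cnb_def pc_def sc_def)
  show "set (cnb N v) \<subseteq> {0..<N}" using N v by (auto simp: cnb_def pc_def sc_def)
  show "v \<notin> set (cnb N v)" using N v by (auto simp: cnb_def pc_def sc_def)
next
  fix v u assume "v \<in> {0..<N}" "u \<in> set (cnb N v)"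
  then show "v \<in> set (cnb N u)" by (auto simp: cnb_def pc_sc sc_pc)
next
  fix u v assume u: "u \<in> {0..<N}" and v: "v \<in> {0..<N}"
  have "v = (u + (v + N - u)) mod N" using u v by simp
  then show "(u, v) \<in> {(x, y). x \<in> {0..<N} \<and> adj (cnb N) x y}\<^sup>*"
    using reach[of u N "v + N - u"] u by simp
qed

lemma bip:
  fixes col :: "nat \<Rightarrow> bool"
  assumes "is_cycle V nb cs"
    and "\<And>x y. x \<in> set cs \<Longrightarrow> y \<in> set cs \<Longrightarrow> adj nb x y \<Longrightarrow> col x \<noteq> col y"
  shows "even (length cs)"
proof -
  have len: "length cs \<ge> 3" using assms(1) by (simp add: is_cycle_def)
  have step: "\<forall>i < length cs - 1. adj nb (cs ! i) (cs ! Suc i)" using assms(1) by (simp add: is_cycle_def)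
  have cl: "adj nb (last cs) (hd cs)" using assms(1) by (simp add: is_cycle_def)
  have c: "i < length cs \<Longrightarrow> col (cs ! i) = (if even i then col (cs ! 0) else \<not> col (cs ! 0))" for i
  proof (induction i)
    case 0 then show ?case by simp
  next
    case (Suc i)
    have "col (cs ! i) \<noteq> col (cs ! Suc i)"
      using assms(2)[of "cs ! i" "cs ! Suc i"] step Suc.prems by auto
    then show ?case using Suc by auto
  qed
  have ne: "cs \<noteq> []" using len by auto
  have "last cs = cs ! (length cs - 1)" "hd cs = cs ! 0"
    by (simp_all add: last_conv_nth[OF ne] hd_conv_nth[OF ne])
  moreover have "col (last cs) \<noteq> col (hd cs)"
    using assms(2)[OF _ _ cl] ne by simp
  ultimately have d: "col (cs ! (length cs - 1)) \<noteq> col (cs ! 0)" by simp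
  have "odd (length cs - 1)"
  proof (rule ccontr)
    assume "\<not> odd (length cs - 1)"
    then show False using c[of "length cs - 1"] d len by simp
  qed
  then show ?thesis using len by simp
qed

lemma og_even:
  assumes "even N" shows "odd_girth_at_least {0..<N} (cnb N) g"
  unfolding odd_girth_at_least_def
proof (intro allI impI)
  fix cs assume a: "is_cycle {0..<N} (cnb N) cs \<and> odd (length cs)"
  have sub: "set cs \<subseteq> {0..<N}" using a by (simp add: is_cycle_def)
  have "even (length cs)"
  proof (rule bip[of "{0..<N}" "cnb N" cs odd])
    show "is_cycle {0..<N} (cnb N) cs" using a by simp
    fix x y assume "x \<in> set cs" "y \<in> set cs" "adj (cnb N) x y"
    then have "x < N" "y = pc N x \<or> y = sc N x" using sub by (auto simp: adj_cnb)
    then show "odd x \<noteq> odd y" using assms by (auto simp: pc_def sc_def split: if_splits; presburger)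
  qed
  then show "g \<le> length cs" using a by simp
qed

lemma col_step:
  assumes "x < N" "x \<noteq> w" "sc N x \<noteq> w" "w < N"
  shows "odd (if w < x then x - w - 1 else x + N - w - 1) \<noteq>
         odd (if w < sc N x then sc N x - w - 1 else sc N x + N - w - 1)"
  using assms by (auto simp: sc_def)

lemma og_odd:
  assumes "3 \<le> N" shows "odd_girth_at_least {0..<N} (cnb N) N"
  unfolding odd_girth_at_least_def
proof (intro allI impI)
  fix cs assume a: "is_cycle {0..<N} (cnb N) cs \<and> odd (length cs)"
  have sub: "set cs \<subseteq> {0..<N}" and dis: "distinct cs" using a by (simp_all add: is_cycle_def)
  have le: "length cs \<le> N" using card_mono[OF _ sub] distinct_card[OF dis] by simp
  show "N \<le> length cs"
  proof (rule ccontr)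
    assume "\<not> N \<le> length cs"
    then have "card (set cs) < card {0..<N}" using distinct_card[OF dis] by simp
    then obtain w where w: "w \<in> {0..<N}" "w \<notin> set cs"
      using sub by (metis card_mono finite_atLeastLessThan not_le subsetI subset_antisym)
    define col where "col v = odd (if w < v then v - w - 1 else v + N - w - 1)" for v
    have "even (length cs)"
    proof (rule bip[of "{0..<N}" "cnb N" cs col])
      show "is_cycle {0..<N} (cnb N) cs" using a by simp
      fix x y assume xy: "x \<in> set cs" "y \<in> set cs" "adj (cnb N) x y"
      then have xN: "x < N" "y < N" "x \<noteq> w" "y \<noteq> w" using sub w by auto
      from xy have "y = pc N x \<or> y = sc N x" by (simp add: adj_cnb)
      then show "col x \<noteq> col y"
      proof
        assume "y = pc N x"
        then have "x = sc N y" using sc_pc xN by simp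
        then show ?thesis using col_step[of y N w] xN w unfolding col_def by auto
      next
        assume "y = sc N x"
        then show ?thesis using col_step[of x N w] xN w unfolding col_def by auto
      qed
    qed
    then show False using a by simp
  qed
qed

lemma ge_sub: "graph_edges {0..<N} (cnb N) \<subseteq> Pow {0..<N}"
proof
  fix e assume "e \<in> graph_edges {0..<N} (cnb N)"
  then obtain u v where e: "e = {u, v}" "u < N" "v \<in> set (cnb N u)"
    unfolding graph_edges_def by auto
  then have "v < N" using pc_lt sc_lt by (auto simp: cnb_def)
  then show "e \<in> Pow {0..<N}" using e by auto
qed

lemma ge_fin: "finite (graph_edges {0..<N} (cnb N))"
  using ge_sub by (rule finite_subset) simp

lemma opt_ge:
  assumes "is_matching V nb M" "finite (graph_edges V nb)"
  shows "card M \<le> opt_matching V nb"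
proof -
  have "{card M | M. is_matching V nb M} \<subseteq> card ` Pow (graph_edges V nb)"
    unfolding is_matching_def by blast
  then have "finite {card M | M. is_matching V nb M}"
    using assms(2) by (meson finite_Pow_iff finite_imageI finite_subset)
  then show ?thesis unfolding opt_matching_def using assms(1) by (auto intro!: Max_ge)
qed


lemma match_bound:
  assumes "is_matching {0..<N} (cnb N) M" "2 \<le> N"
  shows "2 * card M \<le> N"
proof -
  have sub: "M \<subseteq> graph_edges {0..<N} (cnb N)" using assms by (simp add: is_matching_def)
  have finM: "finite M" using sub ge_fin finite_subset by blast
  have c2: "card e = 2" if "e \<in> M" for e
  proof -
    from that sub have "e \<in> graph_edges {0..<N} (cnb N)" by blast
    then obtain u v where e: "e = {u, v}" "u < N" "v \<in> set (cnb N u)"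
      unfolding graph_edges_def by auto
    have "v \<noteq> u" using e(2,3) assms(2) unfolding cnb_def pc_def sc_def by (auto split: if_splits)
    then show ?thesis using e(1) by simp
  qed
  have pw: "pairwise disjnt M" using assms unfolding is_matching_def pairwise_def disjnt_def by blast
  have "card (\<Union>M) = sum card M"
  proof (rule card_Union_disjoint[OF pw])
    fix A assume "A \<in> M" then show "finite A" using c2[of A] by (intro card_ge_0_finite) simp
  qed
  also have "\<dots> = 2 * card M" using c2 by simp
  finally have "card (\<Union>M) = 2 * card M" .
  moreover have "\<Union>M \<subseteq> {0..<N}" using sub ge_sub by blast
  ultimately show ?thesis by (metis card_atLeastLessThan card_mono finite_atLeastLessThan diff_zero)
qed


lemma vs_yes:
  assumes N: "N = 2 * \<kappa> + 1"
  shows "{{v, cnb N v ! p} | v p. v \<in> {0..<N} \<and> oo v = Some p} = (\<lambda>k. {2*k+1, 2*k+2}) ` {..<\<kappa>}"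
proof (intro set_eqI iffI)
  fix e assume "e \<in> {{v, cnb N v ! p} | v p. v \<in> {0..<N} \<and> oo v = Some p}"
  then obtain v p where e: "e = {v, cnb N v ! p}" "v < N" "oo v = Some p" by auto
  show "e \<in> (\<lambda>k. {2*k+1, 2*k+2}) ` {..<\<kappa>}"
  proof (cases "odd v")
    case True
    then obtain k where k: "v = 2*k+1" by (metis oddE)
    have "p = 1" using e True by (simp add: oo_def split: if_splits)
    then have "e = {2*k+1, 2*k+2}" "k < \<kappa>" using e k N by (auto simp: cnb_def sc_def)
    then show ?thesis by auto
  next
    case False
    then have v0: "v \<noteq> 0" using e by (auto simp: oo_def split: if_splits)
    from False obtain j where j: "v = 2*j" by (metis evenE)
    with v0 obtain k where k: "v = 2*k+2" by (cases j) auto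
    have "p = 0" using e False v0 by (simp add: oo_def split: if_splits)
    then have "e = {2*k+1, 2*k+2}" "k < \<kappa>" using e k N by (auto simp: cnb_def pc_def)
    then show ?thesis by auto
  qed
next
  fix e assume "e \<in> (\<lambda>k. {2*k+1, 2*k+2}) ` {..<\<kappa>}"
  then obtain k where k: "k < \<kappa>" "e = {2*k+1, 2*k+2}" by auto
  have "e = {2*k+1, cnb N (2*k+1) ! 1}" "2*k+1 \<in> {0..<N}" "oo (2*k+1) = Some 1"
    using k N by (auto simp: cnb_def sc_def oo_def)
  then show "e \<in> {{v, cnb N v ! p} | v p. v \<in> {0..<N} \<and> oo v = Some p}" by blast
qed

lemma card_M0: "card ((\<lambda>k. {2*k+1, 2*k+2::nat}) ` {..<K}) = K"
proof -
  have "inj_on (\<lambda>k. {2*k+1, 2*k+2::nat}) {..<K}"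
  proof (rule inj_onI)
    fix k l assume "{2*k+1, 2*k+2::nat} = {2*l+1, 2*l+2}"
    then have "2*k+1 \<in> {2*l+1, 2*l+2::nat}" by blast
    then show "k = l" by auto
  qed
  then show ?thesis by (simp add: card_image)
qed


lemma yes_cycle:
  assumes k: "1 \<le> \<kappa>" and N: "N = 2 * \<kappa> + 1"
  shows "yes_instance \<kappa> {0..<N} (cnb N) oo"
proof -
  define M0 where "M0 = (\<lambda>k. {2*k+1, 2*k+2::nat}) ` {..<\<kappa>}"
  have N3: "3 \<le> N" using k N by simp
  have univ: "in_universe \<kappa> {0..<N} (cnb N)"
    unfolding in_universe_def using port_graph_cycle[OF N3] og_odd[OF N3] N by simp
  have sub: "M0 \<subseteq> graph_edges {0..<N} (cnb N)"
  proof
    fix e assume "e \<in> M0"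
    then obtain j where j: "j < \<kappa>" "e = {2*j+1, 2*j+2}" unfolding M0_def by auto
    have "2*j+1 \<in> {0..<N}" "2*j+2 \<in> set (cnb N (2*j+1))" using j N by (auto simp: cnb_def sc_def)
    then show "e \<in> graph_edges {0..<N} (cnb N)" unfolding graph_edges_def using j(2) by blast
  qed
  have ism: "is_matching {0..<N} (cnb N) M0"
    unfolding is_matching_def
  proof (intro conjI sub ballI impI)
    fix e e' assume "e \<in> M0" "e' \<in> M0" "e \<noteq> e'"
    then obtain j j' where "e = {2*j+1, 2*j+2}" "e' = {2*j'+1, 2*j'+2}" "j \<noteq> j'"
      unfolding M0_def by auto
    then show "e \<inter> e' = {}" by auto
  qed
  have enc: "encodes {0..<N} (cnb N) oo M0"
    unfolding encodes_def
  proof (intro conjI sub ballI)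
    fix v assume v: "v \<in> {0..<N}"
    show "case oo v of None \<Rightarrow> \<forall>e\<in>M0. v \<notin> e | Some p \<Rightarrow> p < length (cnb N v) \<and> {v, cnb N v ! p} \<in> M0"
    proof (cases "oo v")
      case None
      then have "v = 0" by (simp add: oo_def split: if_splits)
      then show ?thesis using None unfolding M0_def by auto
    next
      case (Some p)
      have "{v, cnb N v ! p} \<in> M0"
        using vs_yes[OF N] v Some unfolding M0_def by blast
      moreover have "p < 2" using Some by (simp add: oo_def split: if_splits)
      ultimately show ?thesis using Some by (simp add: cnb_def)
    qed
  qed
  have val: "matching_value {0..<N} (cnb N) oo = \<kappa>"
    unfolding matching_value_def using vs_yes[OF N] card_M0 by simp
  have opt1: "\<kappa> \<le> opt_matching {0..<N} (cnb N)"
    using opt_ge[OF ism ge_fin] card_M0 unfolding M0_def by simp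
  have fin: "finite {card M | M. is_matching {0..<N} (cnb N) M}"
  proof -
    have "{card M | M. is_matching {0..<N} (cnb N) M} \<subseteq> card ` Pow (graph_edges {0..<N} (cnb N))"
      unfolding is_matching_def by blast
    then show ?thesis using ge_fin by (meson finite_Pow_iff finite_imageI finite_subset)
  qed
  have opt2: "opt_matching {0..<N} (cnb N) \<le> \<kappa>"
    unfolding opt_matching_def
  proof (subst Max_le_iff[OF fin])
    show "{card M | M. is_matching {0..<N} (cnb N) M} \<noteq> {}" using ism by blast
    show "\<forall>a\<in>{card M | M. is_matching {0..<N} (cnb N) M}. a \<le> \<kappa>"
      using match_bound N3 N by fastforce
  qed
  show ?thesis unfolding yes_instance_def feasible_matching_def
    using univ enc ism val opt1 opt2 by auto
qed


lemma vs_dbl: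
  assumes m: "m = 2 * h + 1"
  shows "{{v, cnb (2*m) v ! p} | v p. v \<in> {0..<2*m} \<and> oo (v mod m) = Some p}
         \<subseteq> (\<lambda>a. {a, a+1}) ` ((\<lambda>k. 2*k+1) ` {..<h} \<union> (\<lambda>k. m+2*k+1) ` {..<h})"
proof
  fix e assume "e \<in> {{v, cnb (2*m) v ! p} | v p. v \<in> {0..<2*m} \<and> oo (v mod m) = Some p}"
  then obtain v p where e: "e = {v, cnb (2*m) v ! p}" "v < 2*m" "oo (v mod m) = Some p" by auto
  define u where "u = v mod m"
  have u: "u = (if v < m then v else v - m)" using e(2) unfolding u_def
    by (simp add: le_mod_geq)
  show "e \<in> (\<lambda>a. {a, a+1}) ` ((\<lambda>k. 2*k+1) ` {..<h} \<union> (\<lambda>k. m+2*k+1) ` {..<h})"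
  proof (cases "odd u")
    case True
    then obtain k where k: "u = 2*k+1" by (metis oddE)
    have "p = 1" using e True unfolding u_def by (simp add: oo_def split: if_splits)
    then have p1: "cnb (2*m) v ! p = sc (2*m) v" by (simp add: cnb_def)
    show ?thesis
    proof (cases "v < m")
      case True
      then have "v = 2*k+1" "k < h" using u k m e(2) by auto
      then show ?thesis using e(1) p1 m by (auto simp: sc_def)
    next
      case False
      then have "v = m+2*k+1" "k < h" using u k m e(2) by auto
      then show ?thesis using e(1) p1 m by (auto simp: sc_def)
    qed
  next
    case False
    then have u0: "u \<noteq> 0" using e(3) unfolding u_def by (auto simp: oo_def split: if_splits)
    from False obtain j where j: "u = 2*j" by (metis evenE)
    with u0 obtain k where k: "u = 2*k+2" by (cases j) auto
    have "p = 0" using e False u0 unfolding u_def by (simp add: oo_def split: if_splits)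
    then have p0: "cnb (2*m) v ! p = pc (2*m) v" by (simp add: cnb_def)
    show ?thesis
    proof (cases "v < m")
      case True
      then have "v = 2*k+2" "k < h" using u k m e(2) by auto
      then have "e = {2*k+1, 2*k+2}" "k < h" using e(1) p0 by (auto simp: pc_def)
      then show ?thesis by (auto intro!: image_eqI)
    next
      case False
      then have "v = m+2*k+2" "k < h" using u k m e(2) by auto
      then have "e = {m+2*k+1, m+2*k+2}" "k < h" using e(1) p0 by (auto simp: pc_def)
      then show ?thesis by (auto intro!: image_eqI)
    qed
  qed
qed

lemma card_A: "card ((\<lambda>k. 2*k+1) ` {..<h} \<union> (\<lambda>k. m+2*k+1::nat) ` {..<h}) \<le> 2 * h"
proof -
  have "card ((\<lambda>k. 2*k+1) ` {..<h} \<union> (\<lambda>k. m+2*k+1::nat) ` {..<h})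
        \<le> card ((\<lambda>k. 2*k+1::nat) ` {..<h}) + card ((\<lambda>k. m+2*k+1::nat) ` {..<h})"
    by (rule card_Un_le)
  also have "\<dots> \<le> h + h" by (intro add_mono) (auto intro: card_image_le[THEN order_trans])
  finally show ?thesis by simp
qed


lemma no_dbl:
  assumes m: "m = 2 * h + 1" and h: "1 \<le> h" and mk: "m \<le> \<kappa>"
  shows "no_instance \<kappa> {0..<2*m} (cnb (2*m)) (\<lambda>v. oo (v mod m))"
proof -
  define A where "A = (\<lambda>k. 2*k+1) ` {..<h} \<union> (\<lambda>k. m+2*k+1::nat) ` {..<h}"
  have N3: "3 \<le> 2*m" using m h by simp
  have univ: "in_universe \<kappa> {0..<2*m} (cnb (2*m))"
    unfolding in_universe_def using port_graph_cycle[OF N3] og_even[of "2*m"] by simp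
  have "matching_value {0..<2*m} (cnb (2*m)) (\<lambda>v. oo (v mod m)) \<le> card ((\<lambda>a. {a, a+1}) ` A)"
    unfolding matching_value_def A_def
    by (rule card_mono) (auto intro!: vs_dbl[OF m, simplified])
  also have "\<dots> \<le> card A" by (rule card_image_le) (simp add: A_def)
  also have "\<dots> \<le> 2 * h" unfolding A_def by (rule card_A)
  finally have val: "matching_value {0..<2*m} (cnb (2*m)) (\<lambda>v. oo (v mod m)) \<le> m - 1" using m by simp
  define PM where "PM = (\<lambda>k. {2*k, 2*k+1::nat}) ` {..<m}"
  have ism: "is_matching {0..<2*m} (cnb (2*m)) PM"
    unfolding is_matching_def
  proof (intro conjI ballI impI)
    show "PM \<subseteq> graph_edges {0..<2*m} (cnb (2*m))"
    proof
      fix e assume "e \<in> PM"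
      then obtain j where j: "j < m" "e = {2*j, 2*j+1}" unfolding PM_def by auto
      have "2*j \<in> {0..<2*m}" "2*j+1 \<in> set (cnb (2*m) (2*j))" using j by (auto simp: cnb_def sc_def)
      then show "e \<in> graph_edges {0..<2*m} (cnb (2*m))" unfolding graph_edges_def using j(2) by blast
    qed
    fix e e' assume "e \<in> PM" "e' \<in> PM" "e \<noteq> e'"
    then obtain j j' where "e = {2*j, 2*j+1}" "e' = {2*j', 2*j'+1}" "j \<noteq> j'"
      unfolding PM_def by auto
    then show "e \<inter> e' = {}" by auto
  qed
  have "card PM = m"
  proof -
    have "inj_on (\<lambda>k. {2*k, 2*k+1::nat}) {..<m}"
    proof (rule inj_onI)
      fix k l assume "{2*k, 2*k+1::nat} = {2*l, 2*l+1}"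
      then have "2*k \<in> {2*l, 2*l+1::nat}" by blast
      then show "k = l" by auto
    qed
    then show ?thesis unfolding PM_def by (simp add: card_image)
  qed
  then have opt: "m \<le> opt_matching {0..<2*m} (cnb (2*m))" using opt_ge[OF ism ge_fin] by simp
  have kpos: "(0::real) < real \<kappa>" using mk m by simp
  have "real (matching_value {0..<2*m} (cnb (2*m)) (\<lambda>v. oo (v mod m)))
        < real (opt_matching {0..<2*m} (cnb (2*m))) / ((real \<kappa> + 1) / real \<kappa>)"
  proof -
    have "real (matching_value {0..<2*m} (cnb (2*m)) (\<lambda>v. oo (v mod m))) \<le> real m - 1"
      using val m by linarith
    also have "\<dots> < real m * real \<kappa> / (real \<kappa> + 1)"
      using mk kpos by (simp add: field_simps)
    also have "\<dots> \<le> real (opt_matching {0..<2*m} (cnb (2*m))) * real \<kappa> / (real \<kappa> + 1)"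
      using opt kpos by (intro divide_right_mono mult_right_mono) auto
    also have "\<dots> = real (opt_matching {0..<2*m} (cnb (2*m))) / ((real \<kappa> + 1) / real \<kappa>)"
      using kpos by (simp add: field_simps)
    finally show ?thesis .
  qed
  then show ?thesis unfolding no_instance_def using univ by simp
qed


definition acc :: "(nat option \<Rightarrow> bool list \<Rightarrow> bool list list \<Rightarrow> bool) \<Rightarrow> nat \<Rightarrow> (nat \<Rightarrow> bool list) \<Rightarrow> bool" where
  "acc D n L \<longleftrightarrow> (\<forall>v<n. D (oo v) (L v) [L (pc n v), L (sc n v)])"

lemma acc_va: "verifier_accepts D {0..<n} (cnb n) oo L = acc D n L"
  by (auto simp: verifier_accepts_def acc_def cnb_def)

lemma red:
  assumes a: "acc D n L" and ij: "i < j" "even i" "even j" "Suc j < n"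
    and eq: "L i = L j" "L (Suc i) = L (Suc j)"
  shows "acc D (n - (j - i)) (\<lambda>v. if v \<le> i then L v else L (v + (j - i)))"
  unfolding acc_def
proof (intro allI impI)
  fix v assume v: "v < n - (j - i)"
  define d where "d = j - i"
  define L' where "L' = (\<lambda>v. if v \<le> i then L v else L (v + (j - i)))"
  define n' where "n' = n - (j - i)"
  define w where "w = (if v \<le> i then v else v + d)"
  have w: "w < n" using v ij unfolding w_def d_def by auto
  have ed: "even d" using ij unfolding d_def by simp
  have o: "oo w = oo v" using ed unfolding w_def oo_def by auto
  have l: "L' v = L w" unfolding L'_def w_def d_def by simp
  have p: "L' (pc n' v) = L (pc n w)"
    using v ij eq unfolding L'_def w_def d_def n'_def pc_def by (cases "v = Suc i") auto
  have s: "L' (sc n' v) = L (sc n w)"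
    using v ij eq unfolding L'_def w_def d_def n'_def sc_def by (cases "v = i") (auto simp: Suc_diff_le)
  have "D (oo w) (L w) [L (pc n w), L (sc n w)]" using a w unfolding acc_def by blast
  then show "D (oo v) ((\<lambda>v. if v \<le> i then L v else L (v + (j - i))) v)
        [(\<lambda>v. if v \<le> i then L v else L (v + (j - i))) (pc (n - (j - i)) v),
         (\<lambda>v. if v \<le> i then L v else L (v + (j - i))) (sc (n - (j - i)) v)]"
    using o l p s unfolding L'_def n'_def by simp
qed


lemma dbl:
  assumes a: "acc D m L" and m: "1 \<le> m"
  shows "verifier_accepts D {0..<2*m} (cnb (2*m)) (\<lambda>v. oo (v mod m)) (\<lambda>v. L (v mod m))"
  unfolding verifier_accepts_def
proof
  fix v assume "v \<in> {0..<2*m}"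
  then have v: "v < 2*m" by simp
  have md: "x < 2*m \<Longrightarrow> x mod m = (if x < m then x else x - m)" for x
    by (simp add: le_mod_geq)
  have u: "v mod m < m" using m by simp
  have p: "pc (2*m) v mod m = pc m (v mod m)"
    using v m md[of v] md[of "pc (2*m) v"] pc_lt[of v "2*m"] unfolding pc_def by (auto split: if_splits)
  have s: "sc (2*m) v mod m = sc m (v mod m)"
    using v m md[of v] md[of "sc (2*m) v"] sc_lt[of v "2*m"] unfolding sc_def by (auto split: if_splits)
  have "D (oo (v mod m)) (L (v mod m)) [L (pc m (v mod m)), L (sc m (v mod m))]"
    using a u unfolding acc_def by blast
  then show "D (oo (v mod m)) (L (v mod m)) (map (\<lambda>v. L (v mod m)) (cnb (2*m) v))"
    using p s by (simp add: cnb_def)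
qed

lemma iter:
  assumes "finite S"
  shows "odd n \<Longrightarrow> 3 \<le> n \<Longrightarrow> acc D n L \<Longrightarrow> L ` {0..<n} \<subseteq> S \<Longrightarrow>
    \<exists>n' L'. odd n' \<and> 3 \<le> n' \<and> n' \<le> 2 * card S ^ 2 + 1 \<and> acc D n' L'"
proof (induction n arbitrary: L rule: less_induct)
  case (less n)
  show ?case
  proof (cases "n \<le> 2 * card S ^ 2 + 1")
    case True then show ?thesis using less.prems by blast
  next
    case False
    obtain h where h: "n = 2*h+1" using less.prems(1) by (metis oddE)
    have hK: "card S ^ 2 < h" using False h by simp
    define E where "E = (\<lambda>k. 2*k) ` {..<h}"
    define f where "f i = (L i, L (Suc i))" for i
    have cE: "card E = h" unfolding E_def by (simp add: card_image inj_on_def)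
    have fE: "f ` E \<subseteq> S \<times> S" using less.prems(4) h unfolding E_def f_def by auto
    have "\<not> inj_on f E"
    proof
      assume "inj_on f E"
      then have "card E \<le> card (S \<times> S)" using card_inj_on_le[OF _ fE] assms by simp
      then show False using cE hK by (simp add: card_cartesian_product power2_eq_square)
    qed
    then obtain a b where ab: "a \<in> E" "b \<in> E" "a \<noteq> b" "f a = f b" unfolding inj_on_def by blast
    have "\<exists>i j. i < j \<and> i \<in> E \<and> j \<in> E \<and> f i = f j"
    proof (cases "a < b")
      case True then show ?thesis using ab by blast
    next
      case False then have "b < a" using ab by simp
      then show ?thesis using ab by metis
    qed
    then obtain i j where ij: "i < j" "i \<in> E" "j \<in> E" "f i = f j" by blast
    have pr: "even i" "even j" "Suc j < n" using ij h unfolding E_def by auto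
    have eq: "L i = L j" "L (Suc i) = L (Suc j)" using ij(4) unfolding f_def by auto
    define L' where "L' = (\<lambda>v. if v \<le> i then L v else L (v + (j - i)))"
    have acc': "acc D (n - (j - i)) L'" unfolding L'_def by (rule red[OF less.prems(3) ij(1) pr eq])
    have lt: "n - (j - i) < n" using ij(1) pr(3) by simp
    have o: "odd (n - (j - i))" using pr less.prems(1) ij(1) by presburger
    have t: "3 \<le> n - (j - i)" using pr ij(1) less.prems(1) by presburger
    have sub: "L' ` {0..<n - (j - i)} \<subseteq> S"
      using less.prems(4) unfolding L'_def by (auto intro!: imageI)
    show ?thesis using less.IH[OF lt o t acc' sub] .
  qed
qed


lemma sum_pow2: "(\<Sum>i\<le>b. (2::nat)^i) < 2^(Suc b)"
  by (induction b) auto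

lemma cardS: "card {xs::bool list. length xs \<le> b} \<le> 2^(Suc b)"
proof -
  have "{xs::bool list. length xs \<le> b} = {xs. set xs \<subseteq> UNIV \<and> length xs \<le> b}" by simp
  then have "card {xs::bool list. length xs \<le> b} = (\<Sum>i\<le>b. 2^i)"
    using card_lists_length_le[of "UNIV::bool set" b] by simp
  then show ?thesis using sum_pow2[of b] by simp
qed

lemma finS: "finite {xs::bool list. length xs \<le> b}"
  using finite_lists_length_le[of "UNIV::bool set" b] by simp

lemma ln_bound:
  assumes "real k \<le> 8 * 4^b" "1 \<le> b" "1 \<le> k"
  shows "ln (real k) / 5 \<le> real b"
proof -
  have "(8::real) * 4^b = 2^(2*b+3)" by (simp add: power_add power_mult)
  also have "\<dots> \<le> 2^(5*b)" using assms(2) by (intro power_increasing) auto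
  finally have "real k \<le> 2^(5*b)" using assms(1) by linarith
  then have "ln (real k) \<le> ln (2^(5*b))" using assms(3) by simp
  also have "\<dots> = real (5*b) * ln 2" by (rule ln_realpow)
  also have "\<dots> \<le> real (5*b) * 1"
    using ln_2_less_1 by (intro mult_left_mono) auto
  finally show ?thesis by simp
qed

theorem theorem5p17:
  shows "\<exists>c > 0. \<exists>\<kappa>0. \<forall>\<kappa> \<ge> \<kappa>0. \<forall>P D. is_APLS \<kappa> P D \<longrightarrow>
           (\<exists>V nb out v. yes_instance \<kappa> V nb out \<and> v \<in> V \<and>
              real (length (P V nb out v)) \<ge> c * ln (real \<kappa>))"
proof (intro exI[of _ "1/5::real"] conjI exI[of _ "9::nat"] allI impI)
  show "(0::real) < 1/5" by simp
  fix \<kappa> :: nat and P D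
  assume k9: "9 \<le> \<kappa>" and apls: "is_APLS \<kappa> P D"
  define N where "N = 2 * \<kappa> + 1"
  have yes: "yes_instance \<kappa> {0..<N} (cnb N) oo" using yes_cycle[of \<kappa> N] k9 N_def by simp
  define L where "L = P {0..<N} (cnb N) oo"
  have accN: "acc D N L"
    using apls yes unfolding is_APLS_def L_def acc_va[symmetric] by blast
  define b where "b = Max (length ` L ` {0..<N})"
  have fin: "finite (length ` L ` {0..<N})" by simp
  have ne: "length ` L ` {0..<N} \<noteq> {}" using N_def by simp
  obtain v where v: "v \<in> {0..<N}" "length (L v) = b"
    using Max_in[OF fin ne] unfolding b_def by auto
  define S where "S = {xs::bool list. length xs \<le> b}"
  have LS: "L ` {0..<N} \<subseteq> S" unfolding S_def b_def using fin by auto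
  have kb: "real \<kappa> \<le> 8 * 4^b"
  proof (rule ccontr)
    assume "\<not> real \<kappa> \<le> 8 * 4^b"
    then have big: "8 * 4^b < \<kappa>"
      by (metis of_nat_le_iff of_nat_mult of_nat_numeral of_nat_power not_le less_imp_le)
    obtain n' L' where n': "odd n'" "3 \<le> n'" "n' \<le> 2 * card S ^ 2 + 1" "acc D n' L'"
      using iter[of S N D L] finS[of b] LS N_def accN k9 unfolding S_def by auto
    have "card S ^ 2 \<le> (2^(Suc b))^2" unfolding S_def by (intro power_mono cardS) simp
    also have "\<dots> = (2^2)^(Suc b)" by (metis power_mult mult.commute)
    also have "\<dots> = 4 * 4^b" by simp
    finally have "n' \<le> \<kappa>" using n'(3) big by linarith
    obtain h where h: "n' = 2*h+1" using n'(1) by (metis oddE)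
    have h1: "1 \<le> h" using h n'(2) by simp
    have va: "verifier_accepts D {0..<2*n'} (cnb (2*n')) (\<lambda>v. oo (v mod n')) (\<lambda>v. L' (v mod n'))"
      using dbl[OF n'(4)] n'(2) by simp
    have "no_instance \<kappa> {0..<2*n'} (cnb (2*n')) (\<lambda>v. oo (v mod n'))"
      using no_dbl[OF h h1 \<open>n' \<le> \<kappa>\<close>] .
    then show False using apls va unfolding is_APLS_def by blast
  qed
  have b1: "1 \<le> b"
  proof (rule ccontr)
    assume "\<not> 1 \<le> b" then have "b = 0" by simp
    then show False using kb k9 by simp
  qed
  have "ln (real \<kappa>) / 5 \<le> real b" using ln_bound[OF kb b1] k9 by simp
  then have "yes_instance \<kappa> {0..<N} (cnb N) oo \<and> v \<in> {0..<N} \<and>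
     real (length (P {0..<N} (cnb N) oo v)) \<ge> 1/5 * ln (real \<kappa>)"
    using yes v unfolding L_def by auto
  then show "\<exists>V nb out v. yes_instance \<kappa> V nb out \<and> v \<in> V \<and>
              real (length (P V nb out v)) \<ge> 1/5 * ln (real \<kappa>)" by blast
qed

end
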